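(* Let $(a_n)_{n\ge0}$ be the sequence defined by \[ \sum_{n=0}^{\infty}a_nz^n=\frac{1+36z+\sqrt{(1-12z)^3}}{2(1+4z)^2} \] (OEIS A220910). Then for every $n\ge0$, \[ a_n=\frac{1-8n}{2}(-4)^n+\binom{2n}{n}\sum_{k=0}^{n}\frac{3^{n+1}(k+1)\prod_{i=0}^{k-1}(n-i)}{8(-3)^k\prod_{i=0}^{k+1}(n-i-1/2)} \] and \[ a_n=\frac{(-4)^n(1-8n)}{16}\left[8-\sum_{k=0}^{n+1}\frac{(-3)^k}{k!}\prod_{i=0}^{k-1}(i-3/2)\right]+\binom{2n}{n}\frac{3^{n+3}}{32(n+1)}. \]
   Context: The square root is the branch analytic near $z=0$ with value $1$ at $z=0$. Empty products equal $1$. *)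

theory Defs
  imports "HOL-Analysis.Analysis"
begin

text \<open>Generating function of OEIS A220910. The square root is the principal
branch csqrt, which near z = 0 (where (1-12z)^3 is near 1) is the branch
analytic near 0 with value 1 at 0.\<close>
definition A220910_gf :: "complex \<Rightarrow> complex" where
  "A220910_gf z = (1 + 36 * z + csqrt ((1 - 12 * z) ^ 3)) / (2 * (1 + 4 * z) ^ 2)"

definition A220910 :: "nat \<Rightarrow> complex" where
  "A220910 n = (deriv ^^ n) A220910_gf 0 / of_nat (fact n)"

end

theory Submission
  imports Defs "HOL-Complex_Analysis.Complex_Analysis"
begin


definition gb :: "nat \<Rightarrow> real" where "gb j = (3/2::real) gchoose j"
definition cc :: "nat \<Rightarrow> real" where "cc j = gb j * 3^j"

lemma gb_Suc: "gb (Suc m) = gb m * (3/2 - real m) / real (Suc m)"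
proof -
  have "fact (Suc m) * gb (Suc m) = (\<Prod>i = 0..<Suc m. 3/2 - of_nat i)"
    unfolding gb_def by (rule gbinomial_mult_fact)
  also have "\<dots> = (fact m * gb m) * (3/2 - real m)"
    unfolding gb_def gbinomial_mult_fact by simp
  finally have "fact (Suc m) * gb (Suc m) = fact m * (gb m * (3/2 - real m))" by simp
  hence "fact m * (real (Suc m) * gb (Suc m)) = fact m * (gb m * (3/2 - real m))"
    by (simp add: algebra_simps)
  hence "real (Suc m) * gb (Suc m) = gb m * (3/2 - real m)" by simp
  thus ?thesis by (simp add: field_simps del: of_nat_Suc)
qed

lemma gb0: "gb 0 = 1" by (simp add: gb_def)

lemma cc_Suc: "cc (Suc m) = cc m * 3 * (3/2 - real m) / real (Suc m)"
  by (simp add: cc_def gb_Suc field_simps del: of_nat_Suc)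

lemma fid0: fixes a b c d B p :: real
  assumes "a\<noteq>0" "b \<noteq> 0" "c\<noteq>0" "d\<noteq>0" "p \<noteq> 0"
  shows "B*2*(2*c)/d*3/(4*c*a) = (-4)*p*(B*3/(4*a*b)/p * (-b)/d)"
  using assms by (simp add: field_simps)
lemma fid: fixes x B p :: real
  assumes "x-1/2\<noteq>0" "x - 3/2 \<noteq> 0" "x+1/2\<noteq>0" "x+1\<noteq>0" "p \<noteq> 0"
  shows "B*2*(2*x+1)/(x+1)*3/(4*((x+1)-1/2)*((x+1)-3/2)) = (-4)*p*(B*3/(4*(x-1/2)*(x-3/2))/p * (3/2-x)/(x+1))"
proof -
  have a: "(x+1)-1/2 = x+1/2" "(x+1)-3/2 = x-1/2" "2*x+1 = 2*(x+1/2)" "3/2-x = -(x-3/2)" by simp_all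
  show ?thesis unfolding a by (rule fid0[OF assms])
qed

lemma base: "real (2 * n choose n) * 3 / (4 * (real n - 1/2) * (real n - 3/2)) = (-4) ^ n * gb n"
proof (induction n)
  case 0 then show ?case by (simp add: gb0)
next
  case (Suc n)
  have h1: "real n - 1/2 \<noteq> 0" "real n - 3/2 \<noteq> 0" "real n + 1/2 \<noteq> 0"
  proof -
    have "real n = 0 \<or> real n = 1 \<or> real n \<ge> 2" by (cases n; cases "n - 1"; auto)
    thus "real n - 1/2 \<noteq> 0" "real n - 3/2 \<noteq> 0" "real n + 1/2 \<noteq> 0" by auto
  qed
  have c: "real (2 * Suc n choose Suc n) = real (2 * n choose n) * 2 * (2 * real n + 1) / (real n + 1)"
  proof -
    have e: "2 * Suc n = Suc (Suc (2 * n))" by simp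
    have "real (2 * Suc n choose Suc n) = fact (2 * Suc n) / (fact (Suc n) * fact (Suc n))"
      by (subst binomial_fact) simp_all
    also have "fact (2 * Suc n) = (fact (2 * n) :: real) * ((2 * real n + 1) * (2 * real n + 2))"
      unfolding e fact_Suc by (simp add: algebra_simps)
    also have "fact (Suc n) = (fact n :: real) * (real n + 1)"
      by (simp add: algebra_simps)
    finally have 1: "real (2 * Suc n choose Suc n) = fact (2 * n) * ((2 * real n + 1) * (2 * real n + 2)) / (fact n * (real n + 1) * (fact n * (real n + 1)))" .
    have 2: "real (2 * n choose n) = fact (2 * n) / (fact n * fact n)"
      by (subst binomial_fact) simp_all
    show ?thesis unfolding 1 2 by (simp add: divide_simps)
  qed
  have g: "gb n = real (2 * n choose n) * 3 / (4 * (real n - 1/2) * (real n - 3/2)) / (-4) ^ n"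
    using Suc.IH by (simp add: field_simps)
  have "real (Suc n) = real n + 1" by simp
  have "(real n + 1) \<noteq> 0" by simp
  note f = fid[OF h1(1,2,3) this, of "(-4)^n" "real (2 * n choose n)"]
  show ?case unfolding c gb_Suc g \<open>real (Suc n) = real n + 1\<close> using f
    by simp
qed

lemma half_ne: "real n - real i - 1/2 \<noteq> (0::real)"
proof
  assume "real n - real i - 1/2 = 0"
  hence "real (2*n) = real (2*i+1)" by simp
  hence "2*n = 2*i+1" by (simp only: of_nat_eq_iff)
  thus False by presburger
qed

lemma PD_ne: "(\<Prod>i = 0..k. real n - real i - 1 / 2) \<noteq> 0"
  using half_ne by (simp add: prod_zero_iff)

lemma step0: fixes C L a b c m p q :: real
  assumes "b \<noteq> 0" "m + 1 \<noteq> 0" "m - 3/2 \<noteq> 0" "p \<noteq> 0"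
  and "C * (t * a / (8 * p * b)) = r / 2 * (cm * 3 * (3/2 - m) / (m + 1))"
  shows "C * (t * (a * (m+1)) / (8 * (-3 * p) * (b * (m - 3/2)))) = r / 2 * cm"
proof -
  have e: "3/2 - m = - (m - 3/2)" by simp
  from assms(5) have "C * (t * a / (8 * p * b)) = r / 2 * (cm * 3 * (- (m - 3/2)) / (m + 1))" unfolding e .
  with assms(1-4) show ?thesis by (simp add: field_simps)
qed

lemma step00: fixes a b C r t :: real
  assumes "a \<noteq> 0" "b \<noteq> 0"
  shows "C * (t * 3 / (8 * (a * b))) = t / 2 * (C * 3 / (4 * a * b))"
  using assms by (simp add: field_simps)

lemma termid: "k \<le> n \<Longrightarrow> real (2*n choose n) * (3^(n+1) * (\<Prod>i = 0..<k. real n - real i)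
     / (8 * (-3)^k * (\<Prod>i = 0..k + 1. real n - real i - 1 / 2))) = (-4)^n / 2 * cc (n - k)"
proof (induction k)
  case 0
  have b: "gb n = real (2 * n choose n) * 3 / (4 * (real n - 1/2) * (real n - 3/2)) / (-4) ^ n"
    using base[of n] by (simp add: field_simps)
  have p: "(\<Prod>i = 0..0 + 1. real n - real i - 1 / 2) = (real n - 1/2) * (real n - 3/2)"
    by (simp add: algebra_simps)
  have ne: "real n - 1/2 \<noteq> 0" "real n - 3/2 \<noteq> 0" using half_ne[of n 0] half_ne[of n 1] by simp_all
  have "real (2*n choose n) * (3^(0+n+1) * 1 / (8 * 1 * ((real n - 1/2) * (real n - 3/2))))
     = 3^n/2 * (real (2*n choose n) * 3 / (4 * (real n - 1/2) * (real n - 3/2)))"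
    using step00[OF ne, of "real (2*n choose n)" "3^n"] by (simp add: mult_ac)
  also have "\<dots> = (-4)^n / 2 * cc n" unfolding base cc_def by simp
  finally show ?case unfolding p by simp
next
  case (Suc k)
  define m where "m = n - Suc k"
  have nk: "n - k = Suc m" using Suc.prems by (simp add: m_def)
  have IH: "real (2*n choose n) * (3^(n+1) * (\<Prod>i = 0..<k. real n - real i)
     / (8 * (-3)^k * (\<Prod>i = 0..k + 1. real n - real i - 1 / 2))) = (-4)^n / 2 * (cc m * 3 * (3/2 - real m) / (real m + 1))"
    using Suc by (simp add: nk cc_Suc)
  have pf: "(\<Prod>i = 0..<Suc k. real n - real i) = (\<Prod>i = 0..<k. real n - real i) * (real m + 1)"
    using Suc.prems by (simp add: m_def of_nat_diff)
  have pd: "(\<Prod>i = 0..Suc k + 1. real n - real i - 1 / 2) = (\<Prod>i = 0..k + 1. real n - real i - 1 / 2) * (real m - 3/2)"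
    using Suc.prems by (simp add: m_def of_nat_diff algebra_simps)
  have ne: "real m - 3/2 \<noteq> 0" using half_ne[of m 1] by simp
  show ?case unfolding pf pd power_Suc m_def[symmetric]
    by (rule step0[OF PD_ne _ ne _ IH]) simp_all
qed

definition PP :: "nat \<Rightarrow> real" where "PP n = (\<Sum>j=0..n. cc j)"
definition SS :: "nat \<Rightarrow> real" where "SS n = (\<Sum>j=0..n. real (n + 1 - j) * cc j)"

lemma SS_Suc: "SS (Suc n) = SS n + PP (Suc n)"
proof -
  have "SS (Suc n) = (\<Sum>j=0..n. real (Suc n + 1 - j) * cc j) + cc (Suc n)"
    unfolding SS_def by simp
  also have "(\<Sum>j=0..n. real (Suc n + 1 - j) * cc j) = (\<Sum>j=0..n. real (n + 1 - j) * cc j + cc j)"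
    by (rule sum.cong) (auto simp: of_nat_diff algebra_simps)
  also have "\<dots> = SS n + PP n" unfolding SS_def PP_def by (simp add: sum.distrib)
  finally show ?thesis by (simp add: PP_def)
qed

lemma SS_form: "SS n = (8 * real n - 1) / 8 * PP n + (real n + 1) * cc (Suc n) / 4"
proof (induction n)
  case 0 then show ?case by (simp add: SS_def PP_def cc_def gb_def)
next
  case (Suc n)
  have r: "cc (Suc (Suc n)) = cc (Suc n) * 3 * (3/2 - (real n + 1)) / (real n + 2)"
    by (simp add: cc_Suc[of "Suc n"])
  have pp: "PP (Suc n) = PP n + cc (Suc n)" by (simp add: PP_def)
  show ?case unfolding SS_Suc Suc r pp by (simp add: field_simps)
qed

lemma Tid: "(-4)^n * cc (Suc n) * (3 - 6 * real n) / 16 = real (2*n choose n) * 3^(n+3) / (32 * (real n + 1))"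
proof -
  have ne: "real n - 1/2 \<noteq> 0" "real n - 3/2 \<noteq> 0" using half_ne[of n 0] half_ne[of n 1] by simp_all
  define a where "a = real n - 1/2"
  define b where "b = real n - 3/2"
  have e: "3/2 - real n = - b" "3 - 6 * real n = - 6 * a" by (simp_all add: a_def b_def)
  have bs: "(-4)^n * gb n = real (2*n choose n) * 3 / (4 * a * b)" using base[of n] by (simp add: a_def b_def)
  have "(-4)^n * cc (Suc n) * (3 - 6 * real n) / 16 = ((-4)^n * gb n) * (3/2 - real n) / (real n + 1) * 3^(n+1) * (3 - 6 * real n) / 16"
    by (simp add: cc_def gb_Suc) (simp add: algebra_simps)
  also have "\<dots> = real (2*n choose n) * 3 / (4 * a * b) * (- b) / (real n + 1) * 3^(n+1) * (- 6 * a) / 16"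
    unfolding bs e ..
  also have "\<dots> = real (2*n choose n) * 3^(n+3) / (32 * (real n + 1))"
  proof -
    have g: "C*3/(4*a*b)*(-b)/d*t*(-6*a)/16 = C*(t*9)/(32*d)" if "a \<noteq> 0" "b \<noteq> 0" "d \<noteq> 0" for C a b d t :: real
      using that by (simp add: field_simps)
    have "real n + 1 \<noteq> 0" by simp
    from g[OF ne[unfolded a_def[symmetric] b_def[symmetric]] this, of "real (2*n choose n)" "3^(n+1)"]
    show ?thesis by (simp add: power_add)
  qed
  finally show ?thesis .
qed

definition val :: "nat \<Rightarrow> real" where
  "val n = (1 - 8 * real n) / 2 * (-4) ^ n + (-4) ^ n / 2 * SS n"

lemma F1: "(1 - 8 * real n) / 2 * (-4) ^ n
            + real (2 * n choose n) *
              (\<Sum>k = 0..n. 3 ^ (n + 1) * real (k + 1) * (\<Prod>i = 0..<k. real n - real i)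
                 / (8 * (-3) ^ k * (\<Prod>i = 0..k + 1. real n - real i - 1 / 2))) = val n"
proof -
  have "real (2 * n choose n) *
              (\<Sum>k = 0..n. 3 ^ (n + 1) * real (k + 1) * (\<Prod>i = 0..<k. real n - real i)
                 / (8 * (-3) ^ k * (\<Prod>i = 0..k + 1. real n - real i - 1 / 2)))
     = (\<Sum>k = 0..n. real (k + 1) * (real (2 * n choose n) * (3 ^ (n + 1) * (\<Prod>i = 0..<k. real n - real i)
                 / (8 * (-3) ^ k * (\<Prod>i = 0..k + 1. real n - real i - 1 / 2)))))"
    by (simp add: sum_distrib_left mult_ac)
  also have "\<dots> = (\<Sum>k = 0..n. real (k + 1) * ((-4)^n / 2 * cc (n - k)))"
  proof (rule sum.cong[OF refl])
    fix k assume "k \<in> {0..n}"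
    hence "k \<le> n" by simp
    show "real (k + 1) * (real (2 * n choose n) * (3 ^ (n + 1) * (\<Prod>i = 0..<k. real n - real i)
                 / (8 * (-3) ^ k * (\<Prod>i = 0..k + 1. real n - real i - 1 / 2)))) = real (k + 1) * ((-4)^n / 2 * cc (n - k))"
      by (simp only: termid[OF \<open>k \<le> n\<close>])
  qed
  also have "\<dots> = (-4)^n / 2 * (\<Sum>k = 0..n. real (k + 1) * cc (n - k))"
    by (simp add: sum_distrib_left mult_ac)
  also have "(\<Sum>k = 0..n. real (k + 1) * cc (n - k)) = SS n"
    unfolding SS_def by (subst sum.atLeastAtMost_rev) (rule sum.cong, auto simp: of_nat_diff)
  finally show ?thesis by (simp add: val_def)
qed

lemma ab1: "(x::real)/f*(m*p) = (x*m)*(p/f)"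
  by (cases "f=0") (simp_all add: field_simps)

lemma cc_alt: "(-3) ^ k / fact k * (\<Prod>i = 0..<k. real i - 3 / 2) = cc k"
proof -
  have "(\<Prod>i = 0..<k. real i - 3 / 2) = (-1)^k * (\<Prod>i = 0..<k. 3 / 2 - real i)"
    using prod_uminus[of "\<lambda>i. 3/2 - real i" "{0..<k}"] by simp
  moreover have "gb k = (\<Prod>i = 0..<k. 3 / 2 - real i) / fact k"
    unfolding gb_def gbinomial_prod_rev by simp
  moreover have "(-3::real)^k * (-1)^k = 3^k"
    by (simp flip: power_mult_distrib)
  ultimately show ?thesis unfolding cc_def ab1 by simp
qed

lemma F2: "(-4) ^ n * (1 - 8 * real n) / 16 *
              (8 - (\<Sum>k = 0..n + 1. (-3) ^ k / fact k * (\<Prod>i = 0..<k. real i - 3 / 2)))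
            + real (2 * n choose n) * 3 ^ (n + 3) / (32 * (real n + 1)) = val n"
proof -
  have s: "(\<Sum>k = 0..n + 1. (-3) ^ k / fact k * (\<Prod>i = 0..<k. real i - 3 / 2)) = PP n + cc (Suc n)"
  proof -
    have "(\<Sum>k = 0..n + 1. (-3) ^ k / fact k * (\<Prod>i = 0..<k. real i - 3 / 2)) = (\<Sum>k = 0..n + 1. cc k)"
      by (rule sum.cong[OF refl]) (rule cc_alt)
    thus ?thesis by (simp add: PP_def)
  qed
  show ?thesis unfolding s val_def SS_form Tid[symmetric] by (simp add: field_simps)
qed



definition gfun :: "complex \<Rightarrow> complex" where "gfun z = (1 - 12 * z) powr (3/2)"
definition GG :: "complex fps" where "GG = fps_compose (fps_binomial (3/2)) (fps_const (-12) * fps_X)"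

lemma gfun_exp: "gfun has_fps_expansion GG"
proof -
  have "((\<lambda>x. (1 + x) powr (3/2 :: complex)) \<circ> (\<lambda>z. -12 * z)) has_fps_expansion
        fps_compose (fps_binomial (3/2)) (fps_const (-12) * fps_X)"
    by (intro has_fps_expansion_compose has_fps_expansion_binomial_complex
          has_fps_expansion_cmult_left has_fps_expansion_fps_X) simp
  thus ?thesis unfolding GG_def gfun_def[abs_def] by (simp add: o_def)
qed

lemma gfun_sq: "1 - 12 * z \<noteq> 0 \<Longrightarrow> (gfun z)^2 = (1 - 12 * z)^3"
proof -
  assume h: "1 - 12 * z \<noteq> 0"
  have "(gfun z)^2 = (1 - 12 * z) powr (of_nat 2 * (3/2))"
    unfolding gfun_def using h by (simp add: powr_power)
  also have "of_nat 2 * (3/2::complex) = of_nat 3" by simp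
  also have "(1 - 12 * z) powr of_nat 3 = (1 - 12 * z)^3" using h by (rule powr_nat'[OF disjI1])
  finally show ?thesis .
qed

lemma gfun_Re: "eventually (\<lambda>z. Re (gfun z) > 0) (nhds 0)"
proof -
  have c: "continuous (at 0) gfun" using has_fps_expansion_imp_continuous[OF gfun_exp] .
  hence "((\<lambda>z. Re (gfun z)) \<longlongrightarrow> Re (gfun 0)) (at 0)"
    by (intro tendsto_Re) (simp add: continuous_at)
  moreover have "Re (gfun 0) = 1" by (simp add: gfun_def)
  ultimately have "eventually (\<lambda>z. Re (gfun z) > 0) (at 0)"
    by (intro order_tendstoD(1)) auto
  thus ?thesis unfolding eventually_nhds_conv_at by (simp add: gfun_def)
qed

lemma csqrt_ev: "eventually (\<lambda>z. csqrt ((1 - 12 * z)^3) = gfun z) (nhds 0)"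
proof -
  have "eventually (\<lambda>z. z \<in> ball 0 (1/12)) (nhds (0::complex))"
    by (intro eventually_nhds_in_open) auto
  with gfun_Re show ?thesis
  proof eventually_elim
    case (elim z)
    have "1 - 12 * z \<noteq> 0"
    proof
      assume "1 - 12 * z = 0"
      hence "z = 1/12" by (simp add: field_simps)
      with elim show False by simp
    qed
    thus ?case using elim by (intro csqrt_unique gfun_sq) auto
  qed
qed

definition QQ :: "complex fps" where "QQ = Abs_fps (\<lambda>n. (-4)^n)"

lemma QQ_inv: "inverse (1 + fps_const 4 * fps_X) = QQ"
proof (rule fps_inverse_unique)
  show "(1 + fps_const 4 * fps_X) * QQ = 1"
  proof (rule fps_ext)
    fix n :: nat
    show "fps_nth ((1 + fps_const 4 * fps_X) * QQ) n = fps_nth 1 n"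
      by (cases n) (simp_all add: QQ_def algebra_simps)
  qed
qed

lemma QQ2_nth: "fps_nth (QQ^2) n = of_nat (n + 1) * (-4)^n"
proof -
  have "fps_nth (QQ^2) n = (\<Sum>i=0..n. (-4)^i * (-4)^(n-i) :: complex)"
    by (simp add: power2_eq_square fps_mult_nth QQ_def)
  also have "\<dots> = (\<Sum>i=0..n. (-4)^n)"
    by (rule sum.cong) (auto simp flip: power_add)
  finally show ?thesis by simp
qed

lemma inv_exp: "(\<lambda>z::complex. inverse (1 + 4 * z)) has_fps_expansion QQ"
proof -
  have "(\<lambda>z::complex. inverse (1 + 4 * z)) has_fps_expansion inverse (1 + fps_const 4 * fps_X)"
    by (intro has_fps_expansion_inverse has_fps_expansion_add has_fps_expansion_cmult_left
          has_fps_expansion_fps_X has_fps_expansion_1) simp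
  thus ?thesis by (simp add: QQ_inv)
qed

definition EE :: "complex fps" where
  "EE = fps_const (1/2) * ((1 + fps_const 36 * fps_X + GG) * QQ^2)"

lemma main_exp: "A220910_gf has_fps_expansion EE"
proof -
  have h1: "(\<lambda>z. (1/2) * ((1 + 36 * z + gfun z) * (inverse (1 + 4 * z))^2)) has_fps_expansion EE"
    unfolding EE_def
    by (intro has_fps_expansion_cmult_left has_fps_expansion_mult has_fps_expansion_add
          has_fps_expansion_power has_fps_expansion_fps_X has_fps_expansion_1 gfun_exp inv_exp)
  have h2: "eventually (\<lambda>z. (1/2) * ((1 + 36 * z + gfun z) * (inverse (1 + 4 * z))^2) = A220910_gf z) (nhds 0)"
    using csqrt_ev
  proof eventually_elim
    case (elim z)
    thus ?case by (simp add: A220910_gf_def field_simps)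
  qed
  show ?thesis
    using h1 has_fps_expansion_cong[OF h2 refl] by simp
qed

lemma gch: "((3/2::complex) gchoose j) = of_real (gb j)"
  unfolding gb_def gbinomial_prod_rev by (simp add: of_real_prod)

lemma GG_nth: "fps_nth GG j = of_real (cc j) * (-4)^j"
proof -
  have "fps_nth GG j = (-12)^j * ((3/2::complex) gchoose j)" unfolding GG_def by (subst fps_nth_compose_linear) simp
  also have "(-12::complex)^j = 3^j * (-4)^j" by (simp flip: power_mult_distrib)
  finally show ?thesis by (simp add: gch cc_def)
qed

lemma EE_nth: "fps_nth EE n = of_real (val n)"
proof -
  have 1: "fps_nth ((1 + fps_const 36 * fps_X) * QQ^2) n = of_real ((1 - 8 * real n) * (-4)^n)"
  proof (cases n)
    case 0 then show ?thesis by (simp add: QQ2_nth algebra_simps)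
  next
    case (Suc m)
    then show ?thesis by (simp add: QQ2_nth algebra_simps)
  qed
  have 2: "fps_nth (GG * QQ^2) n = of_real ((-4)^n * SS n)"
  proof -
    have "fps_nth (GG * QQ^2) n = (\<Sum>i=0..n. of_real (cc i) * (-4)^i * (of_nat (n - i + 1) * (-4)^(n-i)))"
      by (simp add: fps_mult_nth GG_nth QQ2_nth)
    also have "\<dots> = (\<Sum>i=0..n. of_real ((-4)^n * (real (n + 1 - i) * cc i)))"
    proof (rule sum.cong[OF refl])
      fix i assume "i \<in> {0..n}"
      hence "i \<le> n" by simp
      hence "(-4::complex)^i * (-4)^(n-i) = (-4)^n" by (simp flip: power_add)
      moreover have "n - i + 1 = n + 1 - i" using \<open>i \<le> n\<close> by simp
      ultimately show "of_real (cc i) * (-4)^i * (of_nat (n - i + 1) * (-4)^(n-i)) = (of_real ((-4)^n * (real (n + 1 - i) * cc i)) :: complex)"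
        by (simp add: algebra_simps)
    qed
    also have "\<dots> = of_real ((-4)^n * SS n)"
      unfolding SS_def by (simp add: sum_distrib_left)
    finally show ?thesis .
  qed
  have "fps_nth EE n = 1/2 * (fps_nth ((1 + fps_const 36 * fps_X) * QQ^2) n + fps_nth (GG * QQ^2) n)"
    unfolding EE_def by (simp add: distrib_right)
  also have "\<dots> = of_real (val n)"
    unfolding 1 2 val_def by (simp add: field_simps)
  finally show ?thesis .
qed

theorem A_val: "A220910 n = complex_of_real (val n)"
  using fps_nth_fps_expansion[OF main_exp, of n] EE_nth by (simp add: A220910_def)


theorem mainTheorem8:
  fixes n :: nat
  shows "A220910 n = complex_of_real
           ((1 - 8 * real n) / 2 * (-4) ^ n
            + real (2 * n choose n) *
              (\<Sum>k = 0..n. 3 ^ (n + 1) * real (k + 1) * (\<Prod>i = 0..<k. real n - real i)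
                 / (8 * (-3) ^ k * (\<Prod>i = 0..k + 1. real n - real i - 1 / 2))))
     \<and> A220910 n = complex_of_real
           ((-4) ^ n * (1 - 8 * real n) / 16 *
              (8 - (\<Sum>k = 0..n + 1. (-3) ^ k / fact k * (\<Prod>i = 0..<k. real i - 3 / 2)))
            + real (2 * n choose n) * 3 ^ (n + 3) / (32 * (real n + 1)))"
  using A_val[of n] F1[of n] F2[of n] by simp

end
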